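(* Let $(X,\le)$ be a non-empty well-ordered set with least element $x_0$, let $G$ be the free nilpotent group of class two on $X$, and take $A=G$, $K=[G,G]=Z(G)$. For each $y\in X$ let $\psi_y$ be the endomorphism of the abelian group $G/K$ with $\psi_y(x_0K)=yK$ and $\psi_y(xK)=K$ for $x\in X\setminus\{x_0\}$, and let $g\circ_{y}h=g\cdot\psi_y^\uparrow(g)\cdot h\cdot\psi_y^\uparrow(g)^{-1}$ for a lifting $\psi_y^\uparrow:G\to G$ of $\psi_y$ (i.e. $\psi_y^\uparrow(g)K=\psi_y(gK)$). Then $(\circ_y:y\in X)$ is a brace block on $G$, $x_0\circ_y x_0=x_0\cdot y\cdot x_0\cdot y^{-1}$, and the operations $\circ_y$, $y\in X$, are pairwise distinct; hence the brace block consists of $|X|$ distinct operations.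
   Context: A skew brace is a triple $(G,\cdot,\circ)$ where $(G,\cdot)$ and $(G,\circ)$ are groups and $g\circ(h\cdot k)=(g\circ h)\cdot g^{-1}\cdot(g\circ k)$ for all $g,h,k$. A bi-skew brace is a triple $(G,\cdot,\circ)$ such that both $(G,\cdot,\circ)$ and $(G,\circ,\cdot)$ are skew braces. A brace block on a set $G$ is a family of group operations on $G$ any two of which form a bi-skew brace. The operation $\circ_y$ does not depend on the choice of lifting since $K$ is central. *)

theory Defs
  imports "HOL-Algebra.Solvable_Groups"
begin

text \<open>Standard concrete model of the free nilpotent group of class two on a
 (well-)ordered set X: elements are pairs (a,c) where a is a finitely supported
 function X -> Z (the image in G/[G,G], free abelian on X) and c is a finitely
 supported function on pairs x < y (coordinates with respect to the basis of
 basic commutators of [G,G], free abelian on pairs x<y).\<close>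

definition fn2_carrier :: "(('x::linorder \<Rightarrow> int) \<times> ('x \<Rightarrow> 'x \<Rightarrow> int)) set" where
  "fn2_carrier = {(a, c). finite {x. a x \<noteq> 0} \<and> finite {(x, y). c x y \<noteq> 0}
                        \<and> (\<forall>x y. c x y \<noteq> 0 \<longrightarrow> x < y)}"

definition fn2_mult ::
  "(('x::linorder \<Rightarrow> int) \<times> ('x \<Rightarrow> 'x \<Rightarrow> int)) \<Rightarrow> (('x \<Rightarrow> int) \<times> ('x \<Rightarrow> 'x \<Rightarrow> int))
     \<Rightarrow> (('x \<Rightarrow> int) \<times> ('x \<Rightarrow> 'x \<Rightarrow> int))" where
  "fn2_mult g h = (\<lambda>x. fst g x + fst h x,
                   \<lambda>x y. snd g x y + snd h x y + (if x < y then fst g y * fst h x else 0))"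

definition free_nil2 :: "(('x::linorder \<Rightarrow> int) \<times> ('x \<Rightarrow> 'x \<Rightarrow> int)) monoid" where
  "free_nil2 = \<lparr>carrier = fn2_carrier, mult = fn2_mult, one = (\<lambda>_. 0, \<lambda>_ _. 0)\<rparr>"

definition fn2_gen :: "'x::linorder \<Rightarrow> (('x \<Rightarrow> int) \<times> ('x \<Rightarrow> 'x \<Rightarrow> int))" where
  "fn2_gen x = (\<lambda>z. if z = x then 1 else 0, \<lambda>_ _. 0)"

definition group_op :: "'g set \<Rightarrow> ('g \<Rightarrow> 'g \<Rightarrow> 'g) \<Rightarrow> bool" where
  "group_op S f \<longleftrightarrow> (\<exists>e. group \<lparr>carrier = S, mult = f, one = e\<rparr>)"

definition skew_brace :: "'g set \<Rightarrow> ('g \<Rightarrow> 'g \<Rightarrow> 'g) \<Rightarrow> ('g \<Rightarrow> 'g \<Rightarrow> 'g) \<Rightarrow> bool" where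
  "skew_brace S dot circ \<longleftrightarrow>
     (\<exists>e e'. group \<lparr>carrier = S, mult = dot, one = e\<rparr> \<and> group \<lparr>carrier = S, mult = circ, one = e'\<rparr> \<and>
        (\<forall>g\<in>S. \<forall>h\<in>S. \<forall>k\<in>S.
           circ g (dot h k) = dot (dot (circ g h) (inv\<^bsub>\<lparr>carrier = S, mult = dot, one = e\<rparr>\<^esub> g)) (circ g k)))"

definition bi_skew_brace :: "'g set \<Rightarrow> ('g \<Rightarrow> 'g \<Rightarrow> 'g) \<Rightarrow> ('g \<Rightarrow> 'g \<Rightarrow> 'g) \<Rightarrow> bool" where
  "bi_skew_brace S dot circ \<longleftrightarrow> skew_brace S dot circ \<and> skew_brace S circ dot"

definition brace_block :: "'g set \<Rightarrow> ('i \<Rightarrow> 'g \<Rightarrow> 'g \<Rightarrow> 'g) \<Rightarrow> bool" where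
  "brace_block S ops \<longleftrightarrow> (\<forall>i. group_op S (ops i)) \<and> (\<forall>i j. bi_skew_brace S (ops i) (ops j))"

end

theory Submission
  imports Defs
begin


definition fsupp :: "('x \<Rightarrow> int) \<Rightarrow> bool" where
  "fsupp a \<longleftrightarrow> finite {x. a x \<noteq> 0}"

definition fn2_inv :: "(('x::linorder \<Rightarrow> int) \<times> ('x \<Rightarrow> 'x \<Rightarrow> int)) \<Rightarrow> (('x \<Rightarrow> int) \<times> ('x \<Rightarrow> 'x \<Rightarrow> int))" where
  "fn2_inv g = (\<lambda>x. - fst g x, \<lambda>x y. - snd g x y + (if x < y then fst g y * fst g x else 0))"

lemma fn2_carrier_iff:
  "g \<in> fn2_carrier \<longleftrightarrow> fsupp (fst g) \<and> finite {(x, y). snd g x y \<noteq> 0} \<and> (\<forall>x y. snd g x y \<noteq> 0 \<longrightarrow> x < y)"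
  by (cases g) (simp add: fn2_carrier_def fsupp_def)

lemma fn2_carrierI:
  "finite {x. a x \<noteq> 0} \<Longrightarrow> finite {(x,y). c x y \<noteq> 0} \<Longrightarrow> (\<And>x y. c x y \<noteq> 0 \<Longrightarrow> x < y) \<Longrightarrow> (a, c) \<in> fn2_carrier"
  by (auto simp: fn2_carrier_def)

lemma fn2_mult_closed:
  assumes "g \<in> fn2_carrier" "h \<in> fn2_carrier"
  shows "fn2_mult g h \<in> fn2_carrier"
proof -
  obtain a c where g: "g = (a, c)" by (cases g)
  obtain a' c' where h: "h = (a', c')" by (cases h)
  have fa: "finite {x. a x \<noteq> 0}" "finite {x. a' x \<noteq> 0}"
    "finite {(x, y). c x y \<noteq> 0}" "finite {(x, y). c' x y \<noteq> 0}"
    using assms by (auto simp: g h fn2_carrier_def)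
  have o: "\<forall>x y. c x y \<noteq> 0 \<longrightarrow> x < y" "\<forall>x y. c' x y \<noteq> 0 \<longrightarrow> x < y"
    using assms by (auto simp: g h fn2_carrier_def)
  have 1: "{x. a x + a' x \<noteq> 0} \<subseteq> {x. a x \<noteq> 0} \<union> {x. a' x \<noteq> 0}" by auto
  have 2: "{(x, y). c x y + c' x y + (if x < y then a y * a' x else 0) \<noteq> 0}
      \<subseteq> {(x, y). c x y \<noteq> 0} \<union> {(x, y). c' x y \<noteq> 0} \<union> ({x. a' x \<noteq> 0} \<times> {x. a x \<noteq> 0})" by auto
  show ?thesis unfolding g h fn2_mult_def fst_conv snd_conv
    apply (rule fn2_carrierI)
      apply (rule finite_subset[OF 1]) using fa apply simp
     apply (rule finite_subset[OF 2]) using fa apply simp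
    subgoal for x y
    proof -
      assume h: "c x y + c' x y + (if x < y then a y * a' x else 0) \<noteq> 0"
      show "x < y"
      proof (rule ccontr)
        assume "\<not> x < y"
        then have "c x y = 0" "c' x y = 0" using o by auto
        then show False using h \<open>\<not> x < y\<close> by simp
      qed
    qed
    done
qed

lemma fn2_inv_closed:
  assumes "g \<in> fn2_carrier" shows "fn2_inv g \<in> fn2_carrier"
proof -
  obtain a c where g: "g = (a, c)" by (cases g)
  have fa: "finite {x. a x \<noteq> 0}" "finite {(x, y). c x y \<noteq> 0}"
    using assms by (auto simp: g fn2_carrier_def)
  have o: "\<forall>x y. c x y \<noteq> 0 \<longrightarrow> x < y" using assms by (auto simp: g fn2_carrier_def)
  have 2: "{(x, y). - c x y + (if x < y then a y * a x else 0) \<noteq> 0}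
      \<subseteq> {(x, y). c x y \<noteq> 0} \<union> ({x. a x \<noteq> 0} \<times> {x. a x \<noteq> 0})" by auto
  show ?thesis unfolding g fn2_inv_def fst_conv snd_conv
    apply (rule fn2_carrierI)
      using fa apply simp
     apply (rule finite_subset[OF 2]) using fa apply simp
    subgoal for x y using o[rule_format, of x y] by (auto split: if_splits) done
qed

lemma fn2_group: "group (free_nil2 :: (('x::linorder \<Rightarrow> int) \<times> ('x \<Rightarrow> 'x \<Rightarrow> int)) monoid)"
proof (rule groupI)
  fix x y :: "('x \<Rightarrow> int) \<times> ('x \<Rightarrow> 'x \<Rightarrow> int)"
  assume "x \<in> carrier free_nil2" "y \<in> carrier free_nil2"
  then show "x \<otimes>\<^bsub>free_nil2\<^esub> y \<in> carrier free_nil2"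
    by (simp add: free_nil2_def fn2_mult_closed)
next
  show "\<one>\<^bsub>free_nil2\<^esub> \<in> carrier (free_nil2 :: (('x \<Rightarrow> int) \<times> ('x \<Rightarrow> 'x \<Rightarrow> int)) monoid)"
    by (simp add: free_nil2_def fn2_carrier_def)
next
  fix x y z :: "('x \<Rightarrow> int) \<times> ('x \<Rightarrow> 'x \<Rightarrow> int)"
  show "x \<otimes>\<^bsub>free_nil2\<^esub> y \<otimes>\<^bsub>free_nil2\<^esub> z = x \<otimes>\<^bsub>free_nil2\<^esub> (y \<otimes>\<^bsub>free_nil2\<^esub> z)"
    by (auto simp: free_nil2_def fn2_mult_def algebra_simps fun_eq_iff)
next
  fix x :: "('x \<Rightarrow> int) \<times> ('x \<Rightarrow> 'x \<Rightarrow> int)"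
  show "\<one>\<^bsub>free_nil2\<^esub> \<otimes>\<^bsub>free_nil2\<^esub> x = x"
    by (auto simp: free_nil2_def fn2_mult_def fun_eq_iff prod_eq_iff)
next
  fix x :: "('x \<Rightarrow> int) \<times> ('x \<Rightarrow> 'x \<Rightarrow> int)"
  assume "x \<in> carrier free_nil2"
  then have "fn2_inv x \<in> carrier free_nil2" by (simp add: free_nil2_def fn2_inv_closed)
  moreover have "fn2_inv x \<otimes>\<^bsub>free_nil2\<^esub> x = \<one>\<^bsub>free_nil2\<^esub>"
    by (auto simp: free_nil2_def fn2_mult_def fn2_inv_def fun_eq_iff)
  ultimately show "\<exists>y\<in>carrier free_nil2. y \<otimes>\<^bsub>free_nil2\<^esub> x = \<one>\<^bsub>free_nil2\<^esub>" by blast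
qed

lemma fn2_inv_eq:
  assumes "g \<in> carrier free_nil2"
  shows "inv\<^bsub>free_nil2\<^esub> g = fn2_inv g"
  apply (rule group.inv_equality[OF fn2_group])
  using assms apply (auto simp: free_nil2_def fn2_mult_def fn2_inv_def fun_eq_iff)[2]
  using assms fn2_inv_closed[of g] by (simp add: free_nil2_def)



type_synonym 'x fe = "('x \<Rightarrow> int) \<times> ('x \<Rightarrow> 'x \<Rightarrow> int)"

definition opB :: "(('x \<Rightarrow> int) \<Rightarrow> ('x \<Rightarrow> int) \<Rightarrow> 'x \<Rightarrow> 'x \<Rightarrow> int) \<Rightarrow>
   (('x \<Rightarrow> int) \<times> ('x \<Rightarrow> 'x \<Rightarrow> int)) \<Rightarrow> (('x \<Rightarrow> int) \<times> ('x \<Rightarrow> 'x \<Rightarrow> int)) \<Rightarrow> (('x \<Rightarrow> int) \<times> ('x \<Rightarrow> 'x \<Rightarrow> int))" where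
  "opB B g h = (\<lambda>x. fst g x + fst h x, \<lambda>x y. snd g x y + snd h x y + B (fst g) (fst h) x y)"

definition invB :: "(('x \<Rightarrow> int) \<Rightarrow> ('x \<Rightarrow> int) \<Rightarrow> 'x \<Rightarrow> 'x \<Rightarrow> int) \<Rightarrow>
   (('x \<Rightarrow> int) \<times> ('x \<Rightarrow> 'x \<Rightarrow> int)) \<Rightarrow> (('x \<Rightarrow> int) \<times> ('x \<Rightarrow> 'x \<Rightarrow> int))" where
  "invB B g = (\<lambda>x. - fst g x, \<lambda>x y. - snd g x y + B (fst g) (fst g) x y)"

definition bil :: "(('x::linorder \<Rightarrow> int) \<Rightarrow> ('x \<Rightarrow> int) \<Rightarrow> 'x \<Rightarrow> 'x \<Rightarrow> int) \<Rightarrow> bool" where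
  "bil B \<longleftrightarrow>
   (\<forall>a a'. fsupp a \<longrightarrow> fsupp a' \<longrightarrow> finite {(x,y). B a a' x y \<noteq> 0}) \<and>
   (\<forall>a a' x y. B a a' x y \<noteq> 0 \<longrightarrow> x < y) \<and>
   (\<forall>a a' a'' x y. B (\<lambda>z. a z + a' z) a'' x y = B a a'' x y + B a' a'' x y) \<and>
   (\<forall>a a' a'' x y. B a (\<lambda>z. a' z + a'' z) x y = B a a' x y + B a a'' x y) \<and>
   (\<forall>a a' x y. B (\<lambda>z. - a z) a' x y = - B a a' x y) \<and>
   (\<forall>a a' x y. B a (\<lambda>z. - a' z) x y = - B a a' x y) \<and>
   (\<forall>a x y. B (\<lambda>z. 0) a x y = 0) \<and> (\<forall>a x y. B a (\<lambda>z. 0) x y = 0)"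

lemma bilD:
  assumes "bil B"
  shows "fsupp a \<Longrightarrow> fsupp a' \<Longrightarrow> finite {(x,y). B a a' x y \<noteq> 0}"
    "B a a' x y \<noteq> 0 \<Longrightarrow> x < y"
    "B (\<lambda>z. a z + a' z) a'' x y = B a a'' x y + B a' a'' x y"
    "B a (\<lambda>z. a' z + a'' z) x y = B a a' x y + B a a'' x y"
    "B (\<lambda>z. - a z) a' x y = - B a a' x y"
    "B a (\<lambda>z. - a' z) x y = - B a a' x y"
    "B (\<lambda>z. 0) a x y = 0" "B a (\<lambda>z. 0) x y = 0"
  using assms unfolding bil_def by auto

lemma opB_closed:
  assumes B: "bil B" and g: "g \<in> fn2_carrier" and h: "h \<in> fn2_carrier"
  shows "opB B g h \<in> fn2_carrier"
proof -
  obtain a c where gg: "g = (a, c)" by (cases g)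
  obtain a' c' where hh: "h = (a', c')" by (cases h)
  have fa: "fsupp a" "fsupp a'" "finite {(x, y). c x y \<noteq> 0}" "finite {(x, y). c' x y \<noteq> 0}"
    using g h by (auto simp: gg hh fn2_carrier_iff)
  have o: "\<forall>x y. c x y \<noteq> 0 \<longrightarrow> x < y" "\<forall>x y. c' x y \<noteq> 0 \<longrightarrow> x < y"
    using g h by (auto simp: gg hh fn2_carrier_iff)
  have 1: "{x. a x + a' x \<noteq> 0} \<subseteq> {x. a x \<noteq> 0} \<union> {x. a' x \<noteq> 0}" by auto
  have 2: "{(x, y). c x y + c' x y + B a a' x y \<noteq> 0}
      \<subseteq> {(x, y). c x y \<noteq> 0} \<union> {(x, y). c' x y \<noteq> 0} \<union> {(x, y). B a a' x y \<noteq> 0}" by auto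
  show ?thesis unfolding gg hh opB_def fst_conv snd_conv
    apply (rule fn2_carrierI)
      apply (rule finite_subset[OF 1]) using fa apply (simp add: fsupp_def)
     apply (rule finite_subset[OF 2]) using fa bilD(1)[OF B fa(1,2)] apply simp
    subgoal for x y
    proof -
      assume h: "c x y + c' x y + B a a' x y \<noteq> 0"
      show "x < y"
      proof (rule ccontr)
        assume "\<not> x < y"
        then have "c x y = 0" "c' x y = 0" "B a a' x y = 0" using o bilD(2)[OF B, of a a' x y] by auto
        then show False using h by simp
      qed
    qed
    done
qed

lemma invB_closed:
  assumes B: "bil B" and g: "g \<in> fn2_carrier"
  shows "invB B g \<in> fn2_carrier"
proof -
  obtain a c where gg: "g = (a, c)" by (cases g)
  have fa: "fsupp a" "finite {(x, y). c x y \<noteq> 0}"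
    using g by (auto simp: gg fn2_carrier_iff)
  have o: "\<forall>x y. c x y \<noteq> 0 \<longrightarrow> x < y" using g by (auto simp: gg fn2_carrier_iff)
  have 2: "{(x, y). - c x y + B a a x y \<noteq> 0}
      \<subseteq> {(x, y). c x y \<noteq> 0} \<union> {(x, y). B a a x y \<noteq> 0}" by auto
  show ?thesis unfolding gg invB_def fst_conv snd_conv
    apply (rule fn2_carrierI)
      using fa apply (simp add: fsupp_def)
     apply (rule finite_subset[OF 2]) using fa bilD(1)[OF B fa(1) fa(1)] apply simp
    subgoal for x y
    proof -
      assume h: "- c x y + B a a x y \<noteq> 0"
      show "x < y"
      proof (rule ccontr)
        assume "\<not> x < y"
        then have "c x y = 0" "B a a x y = 0" using o bilD(2)[OF B, of a a x y] by auto
        then show False using h by simp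
      qed
    qed
    done
qed

lemma opB_group:
  fixes B :: "('x::linorder \<Rightarrow> int) \<Rightarrow> ('x \<Rightarrow> int) \<Rightarrow> 'x \<Rightarrow> 'x \<Rightarrow> int"
  assumes B: "bil B" and f: "\<forall>g\<in>fn2_carrier. \<forall>h\<in>fn2_carrier. f g h = opB B g h"
  shows "group \<lparr>carrier = fn2_carrier, mult = f, one = (\<lambda>_. 0, \<lambda>_ _. 0)\<rparr>"
    and "g \<in> fn2_carrier \<Longrightarrow> inv\<^bsub>\<lparr>carrier = fn2_carrier, mult = f, one = (\<lambda>_. 0, \<lambda>_ _. 0)\<rparr>\<^esub> g = invB B g"
proof -
  note bs = bilD(3-8)[OF B]
  have f1: "\<And>g h. g \<in> fn2_carrier \<Longrightarrow> h \<in> fn2_carrier \<Longrightarrow> f g h = opB B g h" using f by blast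
  show gr: "group \<lparr>carrier = fn2_carrier, mult = f, one = (\<lambda>_. 0, \<lambda>_ _. 0)\<rparr>"
  proof (rule groupI, simp_all)
    fix x y :: "'x fe" assume "x \<in> fn2_carrier" "y \<in> fn2_carrier"
    then show "f x y \<in> fn2_carrier" using f opB_closed[OF B] by simp
  next
    show "(\<lambda>_. 0, \<lambda>_ _. 0) \<in> (fn2_carrier :: (('x \<Rightarrow> int) \<times> ('x \<Rightarrow> 'x \<Rightarrow> int)) set)"
      by (simp add: fn2_carrier_def)
  next
    fix x y z :: "'x fe" assume xyz: "x \<in> fn2_carrier" "y \<in> fn2_carrier" "z \<in> fn2_carrier"
    show "f (f x y) z = f x (f y z)"
      apply (simp only: f1 opB_closed[OF B] xyz)
      by (simp add: opB_def fun_eq_iff prod_eq_iff bs algebra_simps)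
  next
    fix x :: "'x fe" assume "x \<in> fn2_carrier"
    moreover have "(\<lambda>_. 0, \<lambda>_ _. 0) \<in> (fn2_carrier :: 'x fe set)"
      by (simp add: fn2_carrier_def)
    ultimately show "f (\<lambda>_. 0, \<lambda>_ _. 0) x = x" using f1
      by (simp add: opB_def fun_eq_iff prod_eq_iff bs fn2_carrier_def)
  next
    fix x :: "'x fe" assume x: "x \<in> fn2_carrier"
    have "f (invB B x) x = (\<lambda>_. 0, \<lambda>_ _. 0)" using f x invB_closed[OF B x]
      apply (simp only: f1 opB_closed[OF B] x invB_closed[OF B x])
      by (simp add: opB_def invB_def fun_eq_iff prod_eq_iff bs)
    then show "\<exists>y\<in>fn2_carrier. f y x = (\<lambda>_. 0, \<lambda>_ _. 0)" using invB_closed[OF B x] by blast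
  qed
  assume x: "g \<in> fn2_carrier"
  show "inv\<^bsub>\<lparr>carrier = fn2_carrier, mult = f, one = (\<lambda>_. 0, \<lambda>_ _. 0)\<rparr>\<^esub> g = invB B g"
    apply (rule group.inv_equality[OF gr])
    using x invB_closed[OF B x]
    by (simp_all add: f1)
       (simp_all add: opB_def invB_def fun_eq_iff prod_eq_iff bs)
qed

lemma opB_skew:
  fixes B :: "('x::linorder \<Rightarrow> int) \<Rightarrow> ('x \<Rightarrow> int) \<Rightarrow> 'x \<Rightarrow> 'x \<Rightarrow> int"
  assumes B: "bil B" and C: "bil C"
    and f: "\<forall>g\<in>fn2_carrier. \<forall>h\<in>fn2_carrier. f g h = opB B g h"
    and f': "\<forall>g\<in>fn2_carrier. \<forall>h\<in>fn2_carrier. f' g h = opB C g h"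
  shows "skew_brace fn2_carrier f f'"
  unfolding skew_brace_def
proof (intro exI conjI ballI)
  show "group \<lparr>carrier = fn2_carrier, mult = f, one = (\<lambda>_. 0, \<lambda>_ _. 0)\<rparr>"
    by (rule opB_group(1)[OF B f])
  show "group \<lparr>carrier = fn2_carrier, mult = f', one = (\<lambda>_. 0, \<lambda>_ _. 0)\<rparr>"
    by (rule opB_group(1)[OF C f'])
  fix g h k :: "'x fe" assume ghk: "g \<in> fn2_carrier" "h \<in> fn2_carrier" "k \<in> fn2_carrier"
  note bs = bilD(3-8)[OF B] bilD(3-8)[OF C]
  have i: "inv\<^bsub>\<lparr>carrier = fn2_carrier, mult = f, one = (\<lambda>_. 0, \<lambda>_ _. 0)\<rparr>\<^esub> g = invB B g"
    by (rule opB_group(2)[OF B f ghk(1)])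
  have f1: "\<And>g h. g \<in> fn2_carrier \<Longrightarrow> h \<in> fn2_carrier \<Longrightarrow> f g h = opB B g h" using f by blast
  have f2: "\<And>g h. g \<in> fn2_carrier \<Longrightarrow> h \<in> fn2_carrier \<Longrightarrow> f' g h = opB C g h" using f' by blast
  show "f' g (f h k) = f (f (f' g h) (inv\<^bsub>\<lparr>carrier = fn2_carrier, mult = f, one = (\<lambda>_. 0, \<lambda>_ _. 0)\<rparr>\<^esub> g)) (f' g k)"
    unfolding i apply (simp only: f1 f2 ghk opB_closed[OF B] opB_closed[OF C] invB_closed[OF B])
    by (simp add: opB_def invB_def fun_eq_iff prod_eq_iff bs algebra_simps)
qed



definition By :: "'x::linorder \<Rightarrow> 'x \<Rightarrow> ('x \<Rightarrow> int) \<Rightarrow> ('x \<Rightarrow> int) \<Rightarrow> 'x \<Rightarrow> 'x \<Rightarrow> int" where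
  "By x0 y a a' p q = (if p < q then a q * a' p + a x0 * ((if q = y then a' p else 0) - (if p = y then a' q else 0)) else 0)"

lemma bil_By: "bil (By x0 y)"
  unfolding bil_def
proof (intro conjI allI impI)
  fix a a' :: "'a \<Rightarrow> int" assume fa: "fsupp a" "fsupp a'"
  have "{(x, y'). By x0 y a a' x y' \<noteq> 0} \<subseteq> {p. a' p \<noteq> 0} \<times> ({q. a q \<noteq> 0} \<union> {y}) \<union> {y} \<times> {q. a' q \<noteq> 0}"
    by (auto simp: By_def split: if_splits)
  then show "finite {(x, y'). By x0 y a a' x y' \<noteq> 0}"
    by (rule finite_subset) (use fa in \<open>auto simp: fsupp_def\<close>)
qed (auto simp: By_def algebra_simps split: if_splits)

lemma conj_formula:
  assumes "g \<in> carrier free_nil2" "h \<in> carrier free_nil2" "l \<in> carrier free_nil2"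
  shows "g \<otimes>\<^bsub>free_nil2\<^esub> l \<otimes>\<^bsub>free_nil2\<^esub> h \<otimes>\<^bsub>free_nil2\<^esub> inv\<^bsub>free_nil2\<^esub> l =
    (\<lambda>x. fst g x + fst h x, \<lambda>p q. snd g p q + snd h p q +
       (if p < q then fst g q * fst h p + fst l q * fst h p - fst h q * fst l p else 0))"
  using assms
  by (simp add: fn2_inv_eq) (simp add: free_nil2_def fn2_mult_def fn2_inv_def fun_eq_iff algebra_simps)

lemma conj_By:
  assumes "g \<in> carrier free_nil2" "h \<in> carrier free_nil2" "l \<in> carrier free_nil2"
    and "fst l = (\<lambda>z. if z = y then fst g x0 else 0)"
  shows "g \<otimes>\<^bsub>free_nil2\<^esub> l \<otimes>\<^bsub>free_nil2\<^esub> h \<otimes>\<^bsub>free_nil2\<^esub> inv\<^bsub>free_nil2\<^esub> l = opB (By x0 y) g h"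
  unfolding conj_formula[OF assms(1-3)] assms(4)
  by (simp add: opB_def By_def fun_eq_iff algebra_simps)



definition Zc :: "'x::linorder fe set" where
  "Zc = {g \<in> carrier free_nil2. fst g = (\<lambda>_. 0)}"

lemma fn2_mult_eq: "g \<otimes>\<^bsub>free_nil2\<^esub> h = fn2_mult g h"
  by (simp add: free_nil2_def)

lemma fn2_one_eq: "\<one>\<^bsub>free_nil2\<^esub> = (\<lambda>_. 0, \<lambda>_ _. 0)"
  by (simp add: free_nil2_def)

lemma fn2_carrier_eq: "carrier free_nil2 = fn2_carrier"
  by (simp add: free_nil2_def)

lemma Zc_subgroup: "subgroup (Zc :: 'x::linorder fe set) free_nil2"
proof (rule group.subgroupI[OF fn2_group])
  show "Zc \<subseteq> carrier free_nil2" by (auto simp: Zc_def)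
  show "(Zc :: 'x fe set) \<noteq> {}"
    using monoid.one_closed[OF group.is_monoid[OF fn2_group]] by (auto simp: Zc_def fn2_one_eq intro!: exI[of _ "(\<lambda>_. 0, \<lambda>_ _. 0)"])
  fix a :: "'x fe" assume "a \<in> Zc"
  then show "inv\<^bsub>free_nil2\<^esub> a \<in> Zc"
    using group.inv_closed[OF fn2_group, of a]
    by (auto simp: Zc_def fn2_inv_eq fn2_inv_def)
next
  fix a b :: "'x fe" assume "a \<in> Zc" "b \<in> Zc"
  then show "a \<otimes>\<^bsub>free_nil2\<^esub> b \<in> Zc"
    using monoid.m_closed[OF group.is_monoid[OF fn2_group], of a b]
    by (auto simp: Zc_def fn2_mult_eq fn2_mult_def)
qed

lemma K_sub_Zc: "derived free_nil2 (carrier free_nil2) \<subseteq> (Zc :: 'x::linorder fe set)"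
  unfolding derived_def
proof (rule group.generate_subgroup_incl[OF fn2_group _ Zc_subgroup])
  show "derived_set free_nil2 (carrier free_nil2) \<subseteq> (Zc :: 'x fe set)"
  proof -
    have "g \<otimes>\<^bsub>free_nil2\<^esub> h \<otimes>\<^bsub>free_nil2\<^esub> inv\<^bsub>free_nil2\<^esub> g \<otimes>\<^bsub>free_nil2\<^esub> inv\<^bsub>free_nil2\<^esub> h \<in> Zc"
      if gh: "g \<in> carrier free_nil2" "h \<in> carrier free_nil2" for g h :: "'x fe"
    proof -
    have c: "g \<otimes>\<^bsub>free_nil2\<^esub> h \<otimes>\<^bsub>free_nil2\<^esub> inv\<^bsub>free_nil2\<^esub> g \<otimes>\<^bsub>free_nil2\<^esub> inv\<^bsub>free_nil2\<^esub> h \<in> carrier free_nil2"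
      using gh by (meson monoid.m_closed group.is_monoid group.inv_closed fn2_group)
    then show ?thesis
      using gh unfolding Zc_def
      by (simp add: fn2_inv_eq fn2_mult_eq fn2_mult_def fn2_inv_def fun_eq_iff)
    qed
    then show ?thesis by blast
  qed
qed

definition epq :: "'x \<Rightarrow> 'x \<Rightarrow> int \<Rightarrow> 'x fe" where
  "epq p q m = (\<lambda>_. 0, \<lambda>x y. if x = p \<and> y = q then m else 0)"

lemma epq_carrier: "(p::'x::linorder) < q \<Longrightarrow> epq p q m \<in> carrier free_nil2"
proof -
  assume pq: "p < q"
  have "{(x, y). (if x = p \<and> y = q then m else 0) \<noteq> 0} \<subseteq> {(p, q)}" by auto
  then show ?thesis unfolding epq_def fn2_carrier_eq
    apply (intro fn2_carrierI)
      apply simp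
     apply (erule finite_subset) apply simp
    using pq by (auto split: if_splits)
qed

lemma epq_in_K:
  assumes pq: "(p::'x::linorder) < q"
  shows "epq p q m \<in> derived free_nil2 (carrier free_nil2)"
proof -
  let ?D = "derived free_nil2 (carrier (free_nil2 :: 'x fe monoid))"
  have sD: "subgroup ?D free_nil2"
    by (rule group.derived_is_subgroup[OF fn2_group]) simp
  have gc: "\<And>x. fn2_gen x \<in> carrier (free_nil2 :: 'x fe monoid)"
  proof -
    fix x :: 'x
    have "{z. (if z = x then 1 else 0) \<noteq> (0::int)} = {x}" by auto
    then show "fn2_gen x \<in> carrier (free_nil2 :: 'x fe monoid)"
      unfolding fn2_gen_def fn2_carrier_eq by (intro fn2_carrierI) auto
  qed
  have comm: "fn2_gen q \<otimes>\<^bsub>free_nil2\<^esub> fn2_gen p \<otimes>\<^bsub>free_nil2\<^esub> inv\<^bsub>free_nil2\<^esub> fn2_gen q \<otimes>\<^bsub>free_nil2\<^esub> inv\<^bsub>free_nil2\<^esub> fn2_gen p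
     = epq p q 1"
    using gc pq unfolding epq_def
    apply (simp add: fn2_inv_eq fn2_mult_eq fn2_mult_def fn2_inv_def fn2_gen_def fun_eq_iff)
    using pq by auto
  have e1: "epq p q 1 \<in> ?D"
    unfolding derived_def comm[symmetric] using gc
    by (intro generate.incl) blast
  have mult: "\<And>a b. epq p q a \<otimes>\<^bsub>free_nil2\<^esub> epq p q b = epq p q (a + b)"
    by (simp add: fn2_mult_eq fn2_mult_def epq_def fun_eq_iff)
  have nat: "epq p q (int n) \<in> ?D" for n
  proof (induction n)
    case 0
    have "epq p q (int 0) = \<one>\<^bsub>free_nil2\<^esub>" by (simp add: epq_def fn2_one_eq fun_eq_iff)
    then show ?case using subgroup.one_closed[OF sD] by simp
  next
    case (Suc n)
    have "epq p q (int (Suc n)) = epq p q (int n) \<otimes>\<^bsub>free_nil2\<^esub> epq p q 1" by (simp add: mult add.commute)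
    then show ?case using subgroup.m_closed[OF sD Suc e1] by simp
  qed
  have neg: "inv\<^bsub>free_nil2\<^esub> epq p q a = epq p q (- a)" for a
    using epq_carrier[OF pq, of a]
    by (simp add: fn2_inv_eq fn2_inv_def epq_def fun_eq_iff)
  show ?thesis
  proof (cases "m \<ge> 0")
    case True
    then show ?thesis using nat[of "nat m"] by simp
  next
    case False
    then have "epq p q m = inv\<^bsub>free_nil2\<^esub> epq p q (int (nat (- m)))" by (simp add: neg)
    then show ?thesis using subgroup.m_inv_closed[OF sD nat[of "nat (-m)"]] by simp
  qed
qed

lemma Zc_sub_K: "(Zc :: 'x::linorder fe set) \<subseteq> derived free_nil2 (carrier free_nil2)"
proof -
  let ?D = "derived free_nil2 (carrier (free_nil2 :: 'x fe monoid))"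
  have sD: "subgroup ?D free_nil2"
    by (rule group.derived_is_subgroup[OF fn2_group]) simp
  have main: "finite F \<Longrightarrow> \<forall>c. (\<lambda>_. 0, c) \<in> fn2_carrier \<longrightarrow> {(x, y). c x y \<noteq> 0} \<subseteq> F \<longrightarrow> (\<lambda>_. 0, c) \<in> ?D" for F
  proof (induction F rule: finite_induct)
    case empty
    show ?case
    proof clarify
      fix c :: "'x \<Rightarrow> 'x \<Rightarrow> int" assume "{(x, y). c x y \<noteq> 0} \<subseteq> {}"
      then have "c = (\<lambda>_ _. 0)" by (auto simp: fun_eq_iff)
      then show "(\<lambda>_. 0, c) \<in> ?D" using subgroup.one_closed[OF sD] by (simp add: fn2_one_eq)
    qed
  next
    case (insert pq F)
    obtain p q where pqd: "pq = (p, q)" by (cases pq)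
    show ?case
    proof clarify
      fix c :: "'x \<Rightarrow> 'x \<Rightarrow> int"
      assume cc: "(\<lambda>_. 0, c) \<in> fn2_carrier" and sup: "{(x, y). c x y \<noteq> 0} \<subseteq> insert pq F"
      define c' where "c' = (\<lambda>x y. if x = p \<and> y = q then 0 else c x y)"
      have fc: "finite {(x, y). c x y \<noteq> 0}" "\<forall>x y. c x y \<noteq> 0 \<longrightarrow> x < y"
        using cc by (auto simp: fn2_carrier_def)
      have ss: "{(x, y). c' x y \<noteq> 0} \<subseteq> {(x, y). c x y \<noteq> 0}" by (auto simp: c'_def)
      have c'c: "(\<lambda>_. 0, c') \<in> fn2_carrier"
        apply (rule fn2_carrierI)
          apply simp
         apply (rule finite_subset[OF ss fc(1)])
        using fc(2) by (auto simp: c'_def split: if_splits)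
      have "{(x, y). c' x y \<noteq> 0} \<subseteq> F" using sup by (auto simp: c'_def pqd)
      then have inD: "(\<lambda>_. 0, c') \<in> ?D" using insert.IH c'c by blast
      show "(\<lambda>_. 0, c) \<in> ?D"
      proof (cases "c p q = 0")
        case True
        then have "c' = c" by (auto simp: c'_def fun_eq_iff)
        then show ?thesis using inD by simp
      next
        case False
        then have pq: "p < q" using fc(2) by blast
        have "(\<lambda>_. 0, c) = (\<lambda>_. 0, c') \<otimes>\<^bsub>free_nil2\<^esub> epq p q (c p q)"
          by (simp add: fn2_mult_eq fn2_mult_def epq_def c'_def fun_eq_iff)
        then show ?thesis using subgroup.m_closed[OF sD inD epq_in_K[OF pq]] by simp
      qed
    qed
  qed
  show ?thesis
  proof
    fix g :: "'x fe" assume "g \<in> Zc"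
    then have g: "g = (\<lambda>_. 0, snd g)" "(\<lambda>_. 0, snd g) \<in> fn2_carrier"
      by (cases g, auto simp: Zc_def fn2_carrier_eq)+
    then have "finite {(x, y). snd g x y \<noteq> 0}" unfolding fn2_carrier_def by auto
    then have "(\<lambda>_. 0, snd g) \<in> ?D" using main g(2) by blast
    then show "g \<in> ?D" using g(1) by simp
  qed
qed

lemma K_eq_Zc: "derived free_nil2 (carrier free_nil2) = (Zc :: 'x::linorder fe set)"
  using K_sub_Zc Zc_sub_K by blast



lemma gen_carrier: "fn2_gen x \<in> carrier (free_nil2 :: 'x::linorder fe monoid)"
proof -
  have "{z. (if z = x then 1 else 0) \<noteq> (0::int)} = {x}" by auto
  then show ?thesis
    unfolding fn2_gen_def fn2_carrier_eq by (intro fn2_carrierI) auto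
qed

lemma crux:
  fixes x0 y :: "'x::linorder"
    and psi :: "'x fe set \<Rightarrow> 'x fe set"
    and L :: "'x fe \<Rightarrow> 'x fe"
  defines "G \<equiv> (free_nil2 :: 'x fe monoid)"
  defines "K \<equiv> derived G (carrier G)"
  assumes psi_hom: "psi \<in> hom (G Mod K) (G Mod K)"
    and psi_x0: "psi (K #>\<^bsub>G\<^esub> fn2_gen x0) = K #>\<^bsub>G\<^esub> fn2_gen y"
    and psi_other: "\<forall>x. x \<noteq> x0 \<longrightarrow> psi (K #>\<^bsub>G\<^esub> fn2_gen x) = K"
    and L_carrier: "\<forall>g\<in>carrier G. L g \<in> carrier G"
    and L_lift: "\<forall>g\<in>carrier G. K #>\<^bsub>G\<^esub> L g = psi (K #>\<^bsub>G\<^esub> g)"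
    and g: "g \<in> carrier G"
  shows "fst (L g) = (\<lambda>z. if z = y then fst g x0 else 0)"
proof -
  have grp: "group G" unfolding G_def by (rule fn2_group)
  have KZ: "K = Zc" unfolding K_def G_def by (rule K_eq_Zc)
  have nK: "K \<lhd> G" unfolding K_def by (rule group.derived_self_is_normal[OF grp])
  have sK: "subgroup K G" using nK by (simp add: normal_def)
  have Kc: "K \<subseteq> carrier G" using sK by (rule subgroup.subset)
  have mulG: "\<And>u v. u \<otimes>\<^bsub>G\<^esub> v = fn2_mult u v" by (simp add: G_def fn2_mult_eq)
  have cG: "\<And>u v. u \<in> carrier G \<Longrightarrow> v \<in> carrier G \<Longrightarrow> u \<otimes>\<^bsub>G\<^esub> v \<in> carrier G"
    using monoid.m_closed[OF group.is_monoid[OF grp]] by blast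
  have eqfst: "fst u = fst v" if u: "u \<in> carrier G" and v: "v \<in> carrier G"
      and e: "K #>\<^bsub>G\<^esub> u = K #>\<^bsub>G\<^esub> v" for u v
  proof -
    have "u \<in> K #>\<^bsub>G\<^esub> v" using group.rcos_self[OF grp u sK] e by simp
    then obtain k where k: "k \<in> K" "u = k \<otimes>\<^bsub>G\<^esub> v" unfolding r_coset_def by blast
    have "fst k = (\<lambda>_. 0)" using k(1) KZ by (simp add: Zc_def)
    then show ?thesis using k(2) by (simp add: mulG fn2_mult_def)
  qed
  have eqcos: "K #>\<^bsub>G\<^esub> u = K #>\<^bsub>G\<^esub> v" if u: "u \<in> carrier G" and v: "v \<in> carrier G"
      and e: "fst u = fst v" for u v
  proof -
    have iv: "inv\<^bsub>G\<^esub> v \<in> carrier G" using group.inv_closed[OF grp v] .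
    have f0: "fst (u \<otimes>\<^bsub>G\<^esub> inv\<^bsub>G\<^esub> v) = (\<lambda>_. 0)"
      using e v by (simp add: G_def fn2_inv_eq fn2_mult_eq fn2_mult_def fn2_inv_def fun_eq_iff)
    have k: "u \<otimes>\<^bsub>G\<^esub> inv\<^bsub>G\<^esub> v \<in> K"
      unfolding KZ Zc_def using cG[OF u iv] f0 by (simp add: G_def)
    have "u = (u \<otimes>\<^bsub>G\<^esub> inv\<^bsub>G\<^esub> v) \<otimes>\<^bsub>G\<^esub> v"
      using u v by (simp add: monoid.m_assoc[OF group.is_monoid[OF grp]] iv group.l_inv[OF grp] monoid.r_one[OF group.is_monoid[OF grp]])
    then have "K #>\<^bsub>G\<^esub> u = (K #>\<^bsub>G\<^esub> (u \<otimes>\<^bsub>G\<^esub> inv\<^bsub>G\<^esub> v)) #>\<^bsub>G\<^esub> v"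
      using group.coset_mult_assoc[OF grp Kc cG[OF u iv] v] by simp
    also have "\<dots> = K #>\<^bsub>G\<^esub> v" using subgroup.rcos_const[OF sK grp k] by simp
    finally show ?thesis .
  qed
  define P where "P u = fst (L u)" for u
  have Padd: "P (u \<otimes>\<^bsub>G\<^esub> v) = (\<lambda>z. P u z + P v z)" if u: "u \<in> carrier G" and v: "v \<in> carrier G" for u v
  proof -
    have ru: "K #>\<^bsub>G\<^esub> u \<in> carrier (G Mod K)" using group.rcosetsI[OF grp Kc u] by (simp add: FactGroup_def)
    have rv: "K #>\<^bsub>G\<^esub> v \<in> carrier (G Mod K)" using group.rcosetsI[OF grp Kc v] by (simp add: FactGroup_def)
    have Lu: "L u \<in> carrier G" "L v \<in> carrier G" "L (u \<otimes>\<^bsub>G\<^esub> v) \<in> carrier G"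
      using L_carrier u v cG[OF u v] by auto
    have "K #>\<^bsub>G\<^esub> L (u \<otimes>\<^bsub>G\<^esub> v) = psi (K #>\<^bsub>G\<^esub> (u \<otimes>\<^bsub>G\<^esub> v))" using L_lift cG[OF u v] by simp
    also have "\<dots> = psi ((K #>\<^bsub>G\<^esub> u) \<otimes>\<^bsub>G Mod K\<^esub> (K #>\<^bsub>G\<^esub> v))"
      using normal.rcos_sum[OF nK u v] by (simp add: FactGroup_def)
    also have "\<dots> = psi (K #>\<^bsub>G\<^esub> u) \<otimes>\<^bsub>G Mod K\<^esub> psi (K #>\<^bsub>G\<^esub> v)"
      by (rule hom_mult[OF psi_hom ru rv])
    also have "\<dots> = (K #>\<^bsub>G\<^esub> L u) <#>\<^bsub>G\<^esub> (K #>\<^bsub>G\<^esub> L v)"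
      using L_lift u v by (simp add: FactGroup_def)
    also have "\<dots> = K #>\<^bsub>G\<^esub> (L u \<otimes>\<^bsub>G\<^esub> L v)"
      by (rule normal.rcos_sum[OF nK Lu(1,2)])
    finally have "fst (L (u \<otimes>\<^bsub>G\<^esub> v)) = fst (L u \<otimes>\<^bsub>G\<^esub> L v)"
      by (rule eqfst[OF Lu(3) cG[OF Lu(1,2)]])
    then show ?thesis by (simp add: P_def mulG fn2_mult_def)
  qed
  have Pfst: "P u = P v" if u: "u \<in> carrier G" and v: "v \<in> carrier G" and e: "fst u = fst v" for u v
  proof -
    have "K #>\<^bsub>G\<^esub> L u = K #>\<^bsub>G\<^esub> L v" using L_lift eqcos[OF u v e] u v by simp
    then show ?thesis unfolding P_def using L_carrier u v by (intro eqfst) auto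
  qed
  have gc: "\<And>x. fn2_gen x \<in> carrier G" unfolding G_def by (rule gen_carrier)
  have Px0: "P (fn2_gen x0) = fst (fn2_gen y)"
  proof -
    have "K #>\<^bsub>G\<^esub> L (fn2_gen x0) = K #>\<^bsub>G\<^esub> fn2_gen y" using L_lift gc psi_x0 by simp
    then show ?thesis unfolding P_def using L_carrier gc by (intro eqfst) auto
  qed
  have one: "\<one>\<^bsub>G\<^esub> \<in> carrier G" by (simp add: G_def fn2_one_eq fn2_carrier_eq fn2_carrier_def)
  have Pother: "P (fn2_gen x) = (\<lambda>_. 0)" if "x \<noteq> x0" for x
  proof -
    have "K #>\<^bsub>G\<^esub> L (fn2_gen x) = K #>\<^bsub>G\<^esub> \<one>\<^bsub>G\<^esub>"
      using L_lift gc psi_other that group.coset_mult_one[OF grp Kc] by simp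
    then have "fst (L (fn2_gen x)) = fst (\<one>\<^bsub>G\<^esub>)" using L_carrier gc one by (intro eqfst) auto
    then show ?thesis by (simp add: P_def G_def fn2_one_eq)
  qed
  define Q where "Q a = P (a, \<lambda>_ _. 0)" for a
  have ec: "(a, \<lambda>_ _. 0) \<in> carrier G" if "fsupp a" for a
    using that unfolding G_def fn2_carrier_eq by (intro fn2_carrierI) (auto simp: fsupp_def)
  have fs_add: "fsupp (\<lambda>z. a z + b z)" if "fsupp a" "fsupp b" for a b :: "'x \<Rightarrow> int"
  proof -
    have "{z. a z + b z \<noteq> 0} \<subseteq> {z. a z \<noteq> 0} \<union> {z. b z \<noteq> 0}" by auto
    then show ?thesis using that unfolding fsupp_def by (meson finite_UnI finite_subset)
  qed
  have Qadd: "Q (\<lambda>z. a z + b z) = (\<lambda>z. Q a z + Q b z)" if a: "fsupp a" and b: "fsupp b" for a b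
  proof -
    have "Q (\<lambda>z. a z + b z) = P ((a, \<lambda>_ _. 0) \<otimes>\<^bsub>G\<^esub> (b, \<lambda>_ _. 0))"
      unfolding Q_def
      by (rule Pfst[OF ec[OF fs_add[OF a b]] cG[OF ec[OF a] ec[OF b]]]) (simp add: mulG fn2_mult_def)
    also have "\<dots> = (\<lambda>z. Q a z + Q b z)" unfolding Q_def by (rule Padd[OF ec[OF a] ec[OF b]])
    finally show ?thesis .
  qed
  have fs0: "fsupp (\<lambda>_::'x. 0::int)" by (simp add: fsupp_def)
  have Q0: "Q (\<lambda>_. 0) = (\<lambda>_. 0)"
    using Qadd[OF fs0 fs0] by (simp add: fun_eq_iff)
  have fs_neg: "fsupp (\<lambda>z. - a z)" if "fsupp a" for a :: "'x \<Rightarrow> int"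
    using that by (simp add: fsupp_def)
  have Qneg: "Q (\<lambda>z. - a z) = (\<lambda>z. - Q a z)" if a: "fsupp a" for a
  proof -
    have "(\<lambda>z. Q a z + Q (\<lambda>z. - a z) z) = (\<lambda>_. 0)" using Qadd[OF a fs_neg[OF a]] Q0 by simp
    then have "\<forall>z. Q a z + Q (\<lambda>z. - a z) z = 0" by (simp add: fun_eq_iff)
    then show ?thesis by (simp add: fun_eq_iff add_eq_0_iff)
  qed
  define d where "d x = (\<lambda>z. if z = x then 1 else (0::int))" for x :: 'x
  have fsd: "fsupp (\<lambda>z. m * d x z)" for m x
  proof -
    have "{z. m * d x z \<noteq> 0} \<subseteq> {x}" by (auto simp: d_def)
    then show ?thesis unfolding fsupp_def by (rule finite_subset) auto
  qed
  have Qd: "Q (d x) = (if x = x0 then d y else (\<lambda>_. 0))" for x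
    using Px0 Pother[of x] unfolding Q_def d_def fn2_gen_def by auto
  have Qnat: "Q (\<lambda>z. int n * d x z) = (\<lambda>z. int n * Q (d x) z)" for n x
  proof (induction n)
    case 0
    then show ?case using Q0 by simp
  next
    case (Suc n)
    have fd: "fsupp (d x)" using fsd[of 1 x] by simp
    have "Q (\<lambda>z. int (Suc n) * d x z) = Q (\<lambda>z. int n * d x z + d x z)"
      by (simp add: algebra_simps)
    also have "\<dots> = (\<lambda>z. int n * Q (d x) z + Q (d x) z)"
      using Qadd[OF fsd[of "int n" x] fd] Suc by simp
    finally show ?case by (simp add: algebra_simps)
  qed
  have Qint: "Q (\<lambda>z. m * d x z) = (\<lambda>z. m * Q (d x) z)" for m x
  proof (cases "m \<ge> 0")
    case True
    then show ?thesis using Qnat[of "nat m" x] by simp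
  next
    case False
    define n where "n = nat (- m)"
    have m: "m = - int n" using False by (simp add: n_def)
    have "Q (\<lambda>z. m * d x z) = Q (\<lambda>z. - (int n * d x z))" by (simp add: m)
    also have "\<dots> = (\<lambda>z. - Q (\<lambda>z. int n * d x z) z)" by (rule Qneg[OF fsd])
    also have "\<dots> = (\<lambda>z. - (int n * Q (d x) z))" by (simp only: Qnat)
    also have "\<dots> = (\<lambda>z. m * Q (d x) z)" by (simp add: m)
    finally show ?thesis .
  qed
  have Qall: "finite F \<Longrightarrow> \<forall>a. {z. a z \<noteq> 0} \<subseteq> F \<longrightarrow> Q a = (\<lambda>z. if z = y then a x0 else 0)" for F
  proof (induction F rule: finite_induct)
    case empty
    show ?case
    proof clarify
      fix a :: "'x \<Rightarrow> int" assume "{z. a z \<noteq> 0} \<subseteq> {}"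
      then have az: "a = (\<lambda>_. 0)" by (auto simp: fun_eq_iff)
      then show "Q a = (\<lambda>z. if z = y then a x0 else 0)" by (subst az)+ (simp add: Q0)
    qed
  next
    case (insert w F)
    show ?case
    proof clarify
      fix a :: "'x \<Rightarrow> int" assume sup: "{z. a z \<noteq> 0} \<subseteq> insert w F"
      define a' where "a' = (\<lambda>z. if z = w then 0 else a z)"
      have "{z. a' z \<noteq> 0} \<subseteq> F" using sup by (auto simp: a'_def)
      then have Qa': "Q a' = (\<lambda>z. if z = y then a' x0 else 0)" using insert.IH by blast
      have fa': "fsupp a'" using \<open>{z. a' z \<noteq> 0} \<subseteq> F\<close> insert.hyps(1) unfolding fsupp_def
        by (rule finite_subset)
      have aa: "a = (\<lambda>z. a' z + a w * d w z)" by (auto simp: a'_def d_def fun_eq_iff)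
      have "Q a = (\<lambda>z. Q a' z + a w * Q (d w) z)"
        by (subst aa, subst Qadd[OF fa' fsd]) (simp add: Qint)
      then show "Q a = (\<lambda>z. if z = y then a x0 else 0)"
        unfolding Qa' Qd by (auto simp: a'_def d_def fun_eq_iff)
    qed
  qed
  obtain a c where gac: "g = (a, c)" by (cases g)
  have fa: "fsupp a" using g by (simp add: gac G_def fn2_carrier_eq fn2_carrier_iff)
  have "P g = Q a" unfolding Q_def by (rule Pfst[OF g ec[OF fa]]) (simp add: gac)
  also have "\<dots> = (\<lambda>z. if z = y then a x0 else 0)"
    using Qall[of "{z. a z \<noteq> 0}"] fa by (simp add: fsupp_def)
  finally show ?thesis by (simp add: P_def gac fun_eq_iff)
qed



theorem mainTheorem12:
  fixes x0 :: "'x::wellorder"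
    and psi :: "'x \<Rightarrow> (('x \<Rightarrow> int) \<times> ('x \<Rightarrow> 'x \<Rightarrow> int)) set \<Rightarrow> (('x \<Rightarrow> int) \<times> ('x \<Rightarrow> 'x \<Rightarrow> int)) set"
    and L :: "'x \<Rightarrow> (('x \<Rightarrow> int) \<times> ('x \<Rightarrow> 'x \<Rightarrow> int)) \<Rightarrow> (('x \<Rightarrow> int) \<times> ('x \<Rightarrow> 'x \<Rightarrow> int))"
  defines "G \<equiv> (free_nil2 :: (('x \<Rightarrow> int) \<times> ('x \<Rightarrow> 'x \<Rightarrow> int)) monoid)"
  defines "K \<equiv> derived G (carrier G)"
  assumes least: "\<forall>x. x0 \<le> x"
    and psi_hom: "\<forall>y. psi y \<in> hom (G Mod K) (G Mod K)"
    and psi_x0: "\<forall>y. psi y (K #>\<^bsub>G\<^esub> fn2_gen x0) = K #>\<^bsub>G\<^esub> fn2_gen y"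
    and psi_other: "\<forall>y x. x \<noteq> x0 \<longrightarrow> psi y (K #>\<^bsub>G\<^esub> fn2_gen x) = K"
    and L_carrier: "\<forall>y. \<forall>g\<in>carrier G. L y g \<in> carrier G"
    and L_lift: "\<forall>y. \<forall>g\<in>carrier G. K #>\<^bsub>G\<^esub> L y g = psi y (K #>\<^bsub>G\<^esub> g)"
  shows "brace_block (carrier G)
           (\<lambda>y g h. g \<otimes>\<^bsub>G\<^esub> L y g \<otimes>\<^bsub>G\<^esub> h \<otimes>\<^bsub>G\<^esub> inv\<^bsub>G\<^esub> (L y g))
       \<and> (\<forall>y. fn2_gen x0 \<otimes>\<^bsub>G\<^esub> L y (fn2_gen x0) \<otimes>\<^bsub>G\<^esub> fn2_gen x0 \<otimes>\<^bsub>G\<^esub> inv\<^bsub>G\<^esub> (L y (fn2_gen x0))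
              = fn2_gen x0 \<otimes>\<^bsub>G\<^esub> fn2_gen y \<otimes>\<^bsub>G\<^esub> fn2_gen x0 \<otimes>\<^bsub>G\<^esub> inv\<^bsub>G\<^esub> (fn2_gen y))
       \<and> (\<forall>y z. y \<noteq> z \<longrightarrow>
              (\<exists>g\<in>carrier G. \<exists>h\<in>carrier G.
                 g \<otimes>\<^bsub>G\<^esub> L y g \<otimes>\<^bsub>G\<^esub> h \<otimes>\<^bsub>G\<^esub> inv\<^bsub>G\<^esub> (L y g)
                 \<noteq> g \<otimes>\<^bsub>G\<^esub> L z g \<otimes>\<^bsub>G\<^esub> h \<otimes>\<^bsub>G\<^esub> inv\<^bsub>G\<^esub> (L z g)))"
proof -
  have fstL: "fst (L y g) = (\<lambda>z. if z = y then fst g x0 else 0)" if "g \<in> carrier G" for y :: 'x and g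
    using crux[of "psi y" x0 y "L y" g] psi_hom psi_x0 psi_other L_carrier L_lift that
    unfolding G_def K_def by blast
  have cG: "carrier G = fn2_carrier" by (simp add: G_def fn2_carrier_eq)
  have opeq: "\<forall>g\<in>fn2_carrier. \<forall>h\<in>fn2_carrier.
      (\<lambda>y g h. g \<otimes>\<^bsub>G\<^esub> L y g \<otimes>\<^bsub>G\<^esub> h \<otimes>\<^bsub>G\<^esub> inv\<^bsub>G\<^esub> (L y g)) y g h = opB (By x0 y) g h" for y :: 'x
  proof (intro ballI)
    fix g h :: "'x fe" assume gh: "g \<in> fn2_carrier" "h \<in> fn2_carrier"
    then have gh': "g \<in> carrier G" "h \<in> carrier G" by (simp_all add: cG)
    show "(\<lambda>y g h. g \<otimes>\<^bsub>G\<^esub> L y g \<otimes>\<^bsub>G\<^esub> h \<otimes>\<^bsub>G\<^esub> inv\<^bsub>G\<^esub> (L y g)) y g h = opB (By x0 y) g h"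
      using conj_By[of g h "L y g" y x0] gh' L_carrier fstL[OF gh'(1)] unfolding G_def by simp
  qed
  have part1: "brace_block (carrier G) (\<lambda>y g h. g \<otimes>\<^bsub>G\<^esub> L y g \<otimes>\<^bsub>G\<^esub> h \<otimes>\<^bsub>G\<^esub> inv\<^bsub>G\<^esub> (L y g))"
    unfolding brace_block_def bi_skew_brace_def group_op_def cG
    using opB_group(1)[OF bil_By opeq] opB_skew[OF bil_By bil_By opeq opeq] by blast
  have gc: "\<And>x. fn2_gen x \<in> carrier G" unfolding G_def by (rule gen_carrier)
  have part2: "fn2_gen x0 \<otimes>\<^bsub>G\<^esub> L y (fn2_gen x0) \<otimes>\<^bsub>G\<^esub> fn2_gen x0 \<otimes>\<^bsub>G\<^esub> inv\<^bsub>G\<^esub> (L y (fn2_gen x0))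
              = fn2_gen x0 \<otimes>\<^bsub>G\<^esub> fn2_gen y \<otimes>\<^bsub>G\<^esub> fn2_gen x0 \<otimes>\<^bsub>G\<^esub> inv\<^bsub>G\<^esub> (fn2_gen y)" for y :: 'x
  proof -
    have "fst (fn2_gen y) = (\<lambda>z. if z = y then fst (fn2_gen x0) x0 else 0)"
      by (simp add: fn2_gen_def fun_eq_iff)
    then have "fn2_gen x0 \<otimes>\<^bsub>G\<^esub> fn2_gen y \<otimes>\<^bsub>G\<^esub> fn2_gen x0 \<otimes>\<^bsub>G\<^esub> inv\<^bsub>G\<^esub> (fn2_gen y)
       = opB (By x0 y) (fn2_gen x0) (fn2_gen x0)"
      using conj_By[of "fn2_gen x0" "fn2_gen x0" "fn2_gen y" y x0] gc unfolding G_def by simp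
    moreover have "fn2_gen x0 \<otimes>\<^bsub>G\<^esub> L y (fn2_gen x0) \<otimes>\<^bsub>G\<^esub> fn2_gen x0 \<otimes>\<^bsub>G\<^esub> inv\<^bsub>G\<^esub> (L y (fn2_gen x0))
       = opB (By x0 y) (fn2_gen x0) (fn2_gen x0)"
      using opeq[of y] gc by (simp add: cG)
    ultimately show ?thesis by simp
  qed
  have part3: "\<exists>g\<in>carrier G. \<exists>h\<in>carrier G.
                 g \<otimes>\<^bsub>G\<^esub> L y g \<otimes>\<^bsub>G\<^esub> h \<otimes>\<^bsub>G\<^esub> inv\<^bsub>G\<^esub> (L y g)
                 \<noteq> g \<otimes>\<^bsub>G\<^esub> L z g \<otimes>\<^bsub>G\<^esub> h \<otimes>\<^bsub>G\<^esub> inv\<^bsub>G\<^esub> (L z g)" if yz: "y \<noteq> z" for y z :: 'x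
  proof (rule bexI[OF _ gc[of x0]], rule bexI[OF _ gc[of y]])
    have e1: "fn2_gen x0 \<otimes>\<^bsub>G\<^esub> L y (fn2_gen x0) \<otimes>\<^bsub>G\<^esub> fn2_gen y \<otimes>\<^bsub>G\<^esub> inv\<^bsub>G\<^esub> (L y (fn2_gen x0))
       = opB (By x0 y) (fn2_gen x0) (fn2_gen y)"
      using opeq[of y] gc by (simp add: cG)
    have e2: "fn2_gen x0 \<otimes>\<^bsub>G\<^esub> L z (fn2_gen x0) \<otimes>\<^bsub>G\<^esub> fn2_gen y \<otimes>\<^bsub>G\<^esub> inv\<^bsub>G\<^esub> (L z (fn2_gen x0))
       = opB (By x0 z) (fn2_gen x0) (fn2_gen y)"
      using opeq[of z] gc by (simp add: cG)
    have ne: "opB (By x0 y) (fn2_gen x0) (fn2_gen y) \<noteq> opB (By x0 z) (fn2_gen x0) (fn2_gen y)"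
    proof
      assume eq: "opB (By x0 y) (fn2_gen x0) (fn2_gen y) = opB (By x0 z) (fn2_gen x0) (fn2_gen y)"
      show False
      proof (cases "y < z")
        case True
        have "snd (opB (By x0 y) (fn2_gen x0) (fn2_gen y)) y z = snd (opB (By x0 z) (fn2_gen x0) (fn2_gen y)) y z"
          using eq by simp
        then show False using True yz by (simp add: opB_def By_def fn2_gen_def)
      next
        case False
        then have zy: "z < y" using yz by simp
        have "snd (opB (By x0 y) (fn2_gen x0) (fn2_gen y)) z y = snd (opB (By x0 z) (fn2_gen x0) (fn2_gen y)) z y"
          using eq by simp
        then show False using zy yz by (simp add: opB_def By_def fn2_gen_def)
      qed
    qed
    show "fn2_gen x0 \<otimes>\<^bsub>G\<^esub> L y (fn2_gen x0) \<otimes>\<^bsub>G\<^esub> fn2_gen y \<otimes>\<^bsub>G\<^esub> inv\<^bsub>G\<^esub> (L y (fn2_gen x0))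
       \<noteq> fn2_gen x0 \<otimes>\<^bsub>G\<^esub> L z (fn2_gen x0) \<otimes>\<^bsub>G\<^esub> fn2_gen y \<otimes>\<^bsub>G\<^esub> inv\<^bsub>G\<^esub> (L z (fn2_gen x0))"
      unfolding e1 e2 by (rule ne)
  qed
  show ?thesis using part1 part2 part3 by blast
qed

end
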